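(* Let $\gamma\in(\tfrac12,1]$ and $\varepsilon,\beta>0$. Then there exists a constant $c_2(\varepsilon,\beta,\gamma)$ such that for all $\xi_1\in\mathbb C$ and $\xi_2\in\mathbb R$ with $0\le\operatorname{Im}\xi_1\le1$, $|\xi_1|\ge\varepsilon$, $|\xi_2|\ge\varepsilon$, $|\operatorname{Re}\xi_1-\xi_2|\le\beta\operatorname{Im}\xi_1$, and for every $x\ge0$, $$\Big|e^{i\xi_1x}\int_0^x\frac{e^{-i\xi_1t}-e^{-i\xi_2t}}{(t+1)^\gamma}dt\Big|<\frac{c_2(\varepsilon,\beta,\gamma)}{(x+1)^\gamma}.$$ *)

theory Defs
  imports "HOL-Analysis.Analysis"
begin

end

theory Submission
  imports Defs
begin


lemma cis_minus_1_le: "cmod (cis y - 1) \<le> \<bar>y\<bar>"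
proof -
  have "(cmod (cis y - 1))^2 = (cos y - 1)^2 + (sin y)^2"
    by (simp add: cmod_power2)
  also have "\<dots> = 2 - 2 * cos y"
    using sin_cos_squared_add[of y] by (simp add: power2_eq_square algebra_simps)
  also have "\<dots> = 4 * (sin (y/2))^2"
    using cos_double_sin[of "y/2"] by simp
  also have "\<dots> \<le> 4 * (y/2)^2"
  proof -
    have "(sin (y/2))^2 \<le> (y/2)^2"
      using abs_sin_x_le_abs_x[of "y/2"] abs_le_square_iff by blast
    thus ?thesis by simp
  qed
  also have "\<dots> = y^2" by (simp add: power2_eq_square)
  finally show ?thesis
    by (metis abs_le_square_iff abs_norm_cancel)
qed

lemma exp_minus_1_le:
  assumes "Re z \<le> 0"
  shows "cmod (exp z - 1) \<le> 2 * cmod z"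
proof -
  have "exp z - 1 = of_real (exp (Re z)) * (cis (Im z) - 1) + of_real (exp (Re z) - 1)"
    by (simp add: exp_eq_polar algebra_simps)
  hence "cmod (exp z - 1) \<le> exp (Re z) * cmod (cis (Im z) - 1) + \<bar>exp (Re z) - 1\<bar>"
    by (metis norm_mult norm_of_real norm_triangle_ineq abs_exp_cancel)
  also have "\<dots> \<le> 1 * \<bar>Im z\<bar> + \<bar>Re z\<bar>"
  proof (intro add_mono mult_mono)
    show "exp (Re z) \<le> 1" using assms by simp
    show "cmod (cis (Im z) - 1) \<le> \<bar>Im z\<bar>" by (rule cis_minus_1_le)
    have "1 + Re z \<le> exp (Re z)" by (rule exp_ge_add_one_self)
    moreover have "exp (Re z) \<le> 1" using assms by simp
    ultimately show "\<bar>exp (Re z) - 1\<bar> \<le> \<bar>Re z\<bar>" using assms by linarith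
  qed auto
  also have "\<dots> \<le> 2 * cmod z"
    using abs_Re_le_cmod[of z] abs_Im_le_cmod[of z] by linarith
  finally show ?thesis .
qed

lemma E2: fixes s x :: real assumes "0 \<le> s" "s \<le> 1" "0 \<le> x"
  shows "s * exp (- s * x / 2) \<le> 2 / (x + 1)"
proof -
  have "1 + s*x/2 \<le> exp (s*x/2)" by (rule exp_ge_add_one_self)
  moreover have "s * (x+1) = s*x + s" by (simp add: algebra_simps)
  ultimately have "s * (x+1) \<le> 2 * exp (s*x/2)" using assms by linarith
  hence "s * (x+1) / exp (s*x/2) \<le> 2" by (simp add: divide_le_eq)
  thus ?thesis using assms
    by (simp add: exp_minus field_simps)
qed

lemma E1: fixes s x :: real assumes "0 \<le> s" "s \<le> 1" "0 \<le> x"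
  shows "s^2 * exp (- s * x / 2) * (x/2) \<le> 9 / (x + 1)"
proof -
  have h: "1 + s*x/4 \<le> exp (s*x/4)" by (rule exp_ge_add_one_self)
  have "(1 + s*x/4)^2 \<le> (exp (s*x/4))^2"
    using h assms by (intro power_mono) auto
  also have "(exp (s*x/4))^2 = exp (s*x/2)"
    by (simp add: power2_eq_square exp_add[symmetric])
  finally have h2: "(1 + s*x/4)^2 \<le> exp (s*x/2)" .
  have "s * (s * x) \<le> 1 * (s * x)" using assms by (intro mult_right_mono) auto
  hence "s^2 * x \<le> s * x" by (simp add: power2_eq_square mult.assoc)
  moreover have "(1 + s*x/4)^2 = 1 + s*x/2 + (s*x)^2/16" by (simp add: power2_eq_square algebra_simps)
  moreover have "s^2 * x * (x + 1) = (s*x)^2 + s^2*x" by (simp add: power2_eq_square algebra_simps)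
  moreover have "0 \<le> s*x" using assms by simp
  moreover have "0 \<le> (s*x)^2" by simp
  ultimately have "s^2 * x * (x + 1) \<le> 18 * (1 + s*x/4)^2"
    using assms by linarith
  with h2 have "s^2 * x * (x+1) \<le> 18 * exp (s*x/2)" by linarith
  hence "s^2 * x * (x+1) / exp (s*x/2) \<le> 18" by (simp add: divide_le_eq)
  thus ?thesis using assms
    by (simp add: exp_minus field_simps)
qed

lemma vd_exp: fixes c :: complex shows "((\<lambda>t. exp (c * of_real t)) has_vector_derivative (c * exp (c * of_real t))) (at t within S)"
proof -
  have "((\<lambda>z. exp (c * z)) has_field_derivative (c * exp (c * of_real t))) (at (of_real t))"
    by (auto intro!: derivative_eq_intros simp: mult.commute)
  thus ?thesis by (rule has_vector_derivative_real_field)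
qed

lemma vd_powr:
  assumes "t > -1"
  shows "((\<lambda>t. complex_of_real ((t+1) powr e)) has_vector_derivative of_real (e * (t+1) powr (e-1))) (at t within S)"
proof -
  have "((\<lambda>t. (t+1) powr e) has_real_derivative (e * (t+1) powr (e-1))) (at t)"
    using assms by (auto intro!: derivative_eq_intros)
  hence "((\<lambda>t. complex_of_real ((t+1) powr e)) has_vector_derivative of_real (e * (t+1) powr (e-1))) (at t)"
    by (rule has_vector_derivative_of_real)
  thus ?thesis by (rule has_vector_derivative_at_within)
qed

lemma vd_Psi:
  fixes E P P1 P2 :: "real \<Rightarrow> complex" and b :: real
  assumes "b \<noteq> 0"
    and "(E has_vector_derivative (-\<i> * of_real b * E t)) (at t within S)"
    and "(P has_vector_derivative P1 t) (at t within S)"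
    and "(P1 has_vector_derivative P2 t) (at t within S)"
  shows "((\<lambda>t. E t * (\<i> / of_real b * P t + 1 / (of_real b)^2 * P1 t)) has_vector_derivative
          (E t * P t + E t * P2 t / (of_real b)^2)) (at t within S)"
proof -
  have "((\<lambda>t. \<i> / of_real b * P t + 1 / (of_real b)^2 * P1 t) has_vector_derivative
         (\<i> / of_real b * P1 t + 1 / (of_real b)^2 * P2 t)) (at t within S)"
    using assms by (intro has_vector_derivative_add has_vector_derivative_mult_right)
  hence "((\<lambda>t. E t * (\<i> / of_real b * P t + 1 / (of_real b)^2 * P1 t)) has_vector_derivative
          (E t * (\<i> / of_real b * P1 t + 1 / (of_real b)^2 * P2 t) + (-\<i> * of_real b * E t) * (\<i> / of_real b * P t + 1 / (of_real b)^2 * P1 t))) (at t within S)"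
    using assms by (intro has_vector_derivative_mult)
  moreover have "E t * (\<i> / of_real b * P1 t + 1 / (of_real b)^2 * P2 t) + (-\<i> * of_real b * E t) * (\<i> / of_real b * P t + 1 / (of_real b)^2 * P1 t)
      = E t * P t + E t * P2 t / (of_real b)^2"
    using assms(1) by (simp add: field_simps power2_eq_square)
  ultimately show ?thesis by simp
qed

lemma vd_psi:
  fixes C c :: complex
  assumes "t > -1"
  shows "((\<lambda>t. C * ((exp (c * of_real t) - 1) * of_real ((t+1) powr e))) has_vector_derivative
     C * (c * exp (c * of_real t) * of_real ((t+1) powr e) + (exp (c * of_real t) - 1) * of_real (e * (t+1) powr (e-1)))) (at t within S)"
proof -
  have 1: "((\<lambda>t. exp (c * of_real t) - 1) has_vector_derivative (c * exp (c * of_real t))) (at t within S)"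
    using has_vector_derivative_diff[OF vd_exp[of c t S] has_vector_derivative_const[of 1]] by simp
  have 2: "((\<lambda>t. complex_of_real ((t+1) powr e)) has_vector_derivative of_real (e * (t+1) powr (e-1))) (at t within S)"
    using assms by (rule vd_powr)
  have "((\<lambda>t. C * ((exp (c * of_real t) - 1) * of_real ((t+1) powr e))) has_vector_derivative
     C * ((exp (c * of_real t) - 1) * of_real (e * (t+1) powr (e-1)) + c * exp (c * of_real t) * of_real ((t+1) powr e))) (at t within S)"
    using 1 2 by (intro has_vector_derivative_mult_right has_vector_derivative_mult)
  thus ?thesis by (simp add: algebra_simps)
qed

lemma vd_psi1:
  fixes C c :: complex
  assumes "t > -1"
  shows "((\<lambda>t. C * (c * exp (c * of_real t) * of_real ((t+1) powr e) + (exp (c * of_real t) - 1) * of_real (e * (t+1) powr (e-1)))) has_vector_derivative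
     C * (c^2 * exp (c * of_real t) * of_real ((t+1) powr e) + 2 * c * exp (c * of_real t) * of_real (e * (t+1) powr (e-1))
          + (exp (c * of_real t) - 1) * of_real (e * (e - 1) * (t+1) powr (e-2)))) (at t within S)"
proof -
  have 1: "((\<lambda>t. exp (c * of_real t) - 1) has_vector_derivative (c * exp (c * of_real t))) (at t within S)"
    using has_vector_derivative_diff[OF vd_exp[of c t S] has_vector_derivative_const[of 1]] by simp
  have h1b: "((\<lambda>t. c * exp (c * of_real t)) has_vector_derivative (c * (c * exp (c * of_real t)))) (at t within S)"
    using vd_exp[of c t S] by (intro has_vector_derivative_mult_right)
  have 2: "((\<lambda>t. complex_of_real ((t+1) powr e)) has_vector_derivative of_real (e * (t+1) powr (e-1))) (at t within S)"
    using assms by (rule vd_powr)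
  have 3: "((\<lambda>t. complex_of_real ((t+1) powr (e-1))) has_vector_derivative of_real ((e-1) * (t+1) powr (e-1-1))) (at t within S)"
    using assms by (rule vd_powr)
  have h3b: "((\<lambda>t. complex_of_real (e * (t+1) powr (e-1))) has_vector_derivative of_real e * of_real ((e-1) * (t+1) powr (e-1-1))) (at t within S)"
    using has_vector_derivative_mult_right[OF 3, of "of_real e"] by simp
  have "((\<lambda>t. C * (c * exp (c * of_real t) * of_real ((t+1) powr e) + (exp (c * of_real t) - 1) * of_real (e * (t+1) powr (e-1)))) has_vector_derivative
     C * ((c * exp (c * of_real t) * of_real (e * (t+1) powr (e-1)) + c * (c * exp (c * of_real t)) * of_real ((t+1) powr e))
       + ((exp (c * of_real t) - 1) * (of_real e * of_real ((e-1) * (t+1) powr (e-1-1))) + c * exp (c * of_real t) * of_real (e * (t+1) powr (e-1))))) (at t within S)"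
    using 1 h1b 2 h3b vd_exp[of c t S] by (intro has_vector_derivative_mult_right has_vector_derivative_add has_vector_derivative_mult)
  moreover have "e - 1 - 1 = e - 2" by simp
  ultimately show ?thesis by (simp add: algebra_simps power2_eq_square)
qed

lemma powr_half_bound:
  fixes x t e :: real
  assumes "0 \<le> x" "x/2 \<le> t" "e \<le> 0"
  shows "(t+1) powr e \<le> 2 powr (-e) * (x+1) powr e"
proof -
  have "(t+1) powr e \<le> ((x+1)/2) powr e"
    using assms by (intro powr_mono2') auto
  also have "\<dots> = 2 powr (-e) * (x+1) powr e"
    using assms by (simp add: powr_divide powr_minus_divide)
  finally show ?thesis .
qed

lemma M0_int:
  fixes s x \<gamma> :: real
  assumes s0: "0 \<le> s" and s1: "s \<le> 1" and x0: "0 \<le> x" and g1: "1/2 < \<gamma>" and g2: "\<gamma> \<le> 1"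
  shows "integral {0..x} (\<lambda>t. s^2 * exp (-s*(x-t)) * (t+1) powr (-\<gamma>) + s * exp (-s*(x-t)) * (t+1) powr (-\<gamma>-1))
         \<le> 20 * (x+1) powr (-\<gamma>)"
proof -
  define M where "M = (\<lambda>t. s^2 * exp (-s*(x-t)) * (t+1) powr (-\<gamma>) + s * exp (-s*(x-t)) * (t+1) powr (-\<gamma>-1))"
  have cont: "continuous_on {0..x} M"
    unfolding M_def by (intro continuous_intros) auto
  hence int: "M integrable_on {0..x}" by (rule integrable_continuous_interval)
  have int1: "M integrable_on {0..x/2}"
    by (rule integrable_on_subinterval[OF int]) (use x0 in auto)
  have int2: "M integrable_on {x/2..x}"
    by (rule integrable_on_subinterval[OF int]) (use x0 in auto)
  have comb: "integral {0..x/2} M + integral {x/2..x} M = integral {0..x} M"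
    using x0 int by (intro Henstock_Kurzweil_Integration.integral_combine) auto
  have xp: "(x+1) powr (-1) \<le> (x+1) powr (-\<gamma>)"
    using x0 g2 by (intro powr_mono) auto
  have inv: "1 / (x+1) = (x+1) powr (-1)"
    using x0 by (simp add: powr_minus_divide)
  define A where "A = s * exp (-s*x/2)"
  have A0: "0 \<le> A" using s0 by (simp add: A_def)
  define G1 where "G1 = (\<lambda>t::real. s * A * t - A * (t+1) powr (-\<gamma>) / \<gamma>)"
  define g1f where "g1f = (\<lambda>t::real. s * A + A * (t+1) powr (-\<gamma>-1))"
  have dG1: "(G1 has_vector_derivative g1f t) (at t within {0..x/2})" if "t \<in> {0..x/2}" for t
  proof -
    have "(G1 has_real_derivative (s * A * 1 - A * (-\<gamma> * (t+1) powr (-\<gamma>-1)) / \<gamma>)) (at t within {0..x/2})"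
      unfolding G1_def using that by (auto intro!: derivative_eq_intros)
    moreover have "s * A * 1 - A * (-\<gamma> * (t+1) powr (-\<gamma>-1)) / \<gamma> = g1f t"
      using g1 by (simp add: g1f_def field_simps)
    ultimately show ?thesis by (simp add: has_real_derivative_iff_has_vector_derivative)
  qed
  have hG1: "(g1f has_integral (G1 (x/2) - G1 0)) {0..x/2}"
    using x0 dG1 by (intro fundamental_theorem_of_calculus) auto
  have le1: "M t \<le> g1f t" if "t \<in> {0..x/2}" for t
  proof -
    have e: "exp (-s*(x-t)) \<le> exp (-s*x/2)"
      using that s0 by (auto intro: mult_left_mono simp: algebra_simps)
    have p: "(t+1) powr (-\<gamma>) \<le> 1"
      using powr_mono2'[of "-\<gamma>" 1 "t+1"] that g1 by simp
    have "s^2 * exp (-s*(x-t)) * (t+1) powr (-\<gamma>) \<le> s^2 * exp (-s*x/2) * 1"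
      using e p s0 by (intro mult_mono) auto
    moreover have "s * exp (-s*(x-t)) * (t+1) powr (-\<gamma>-1) \<le> s * exp (-s*x/2) * (t+1) powr (-\<gamma>-1)"
      using e s0 by (intro mult_mono) auto
    ultimately show ?thesis
      by (simp add: M_def g1f_def A_def power2_eq_square mult.assoc)
  qed
  have I1: "integral {0..x/2} M \<le> G1 (x/2) - G1 0"
    using has_integral_le[OF integrable_integral[OF int1] hG1] le1 by auto
  have gne: "\<gamma> \<noteq> 0" using g1 by auto
  have "G1 (x/2) - G1 0 = s * A * (x/2) + A * (1 - (x/2+1) powr (-\<gamma>)) / \<gamma>"
    using gne unfolding G1_def by (simp add: divide_simps) (simp add: algebra_simps)
  also have "\<dots> \<le> s * A * (x/2) + A * 1 / (1/2)"
  proof -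
    have "0 \<le> (x/2+1) powr (-\<gamma>)" by simp
    hence "A * (1 - (x/2+1) powr (-\<gamma>)) \<le> A * 1" using A0 by (intro mult_left_mono) auto
    moreover have "0 \<le> A * 1" using A0 by simp
    ultimately have "A * (1 - (x/2+1) powr (-\<gamma>)) / \<gamma> \<le> A * 1 / \<gamma>"
      using g1 by (intro divide_right_mono) auto
    also have "\<dots> \<le> A * 1 / (1/2)"
      using g1 A0 by (intro divide_left_mono) auto
    finally show ?thesis by simp
  qed
  also have "\<dots> \<le> 9 / (x+1) + 4 / (x+1)"
  proof -
    have "s * A * (x/2) = s^2 * exp (- s * x / 2) * (x/2)" by (simp add: A_def power2_eq_square)
    hence h1: "s * A * (x/2) \<le> 9/(x+1)" using E1[OF s0 s1 x0] by linarith
    have "A * 1 / (1/2) = 2 * (s * exp (- s * x / 2))" by (simp add: A_def)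
    hence h2: "A * 1 / (1/2) \<le> 4/(x+1)" using E2[OF s0 s1 x0] by simp
    show ?thesis using h1 h2 by linarith
  qed
  also have "\<dots> = 13 * (x+1) powr (-1)" using inv by simp
  also have "\<dots> \<le> 13 * (x+1) powr (-\<gamma>)" using xp by simp
  finally have I1': "integral {0..x/2} M \<le> 13 * (x+1) powr (-\<gamma>)" using I1 by linarith
  define P where "P = (x+1) powr (-\<gamma>)"
  define Q where "Q = (x+1) powr (-\<gamma>-1)"
  define G2 where "G2 = (\<lambda>t::real. 2 * s * P * exp (-s*(x-t)) + 4 * s * Q * t)"
  define g2f where "g2f = (\<lambda>t::real. 2 * s^2 * P * exp (-s*(x-t)) + 4 * s * Q)"
  have dG2: "(G2 has_vector_derivative g2f t) (at t within {x/2..x})" for t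
  proof -
    have "(G2 has_real_derivative (2 * s * P * (exp (-s*(x-t)) * (-s * (0 - 1))) + 4 * s * Q * 1)) (at t within {x/2..x})"
      unfolding G2_def by (auto intro!: derivative_eq_intros)
    moreover have "2 * s * P * (exp (-s*(x-t)) * (-s * (0 - 1))) + 4 * s * Q * 1 = g2f t"
      by (simp add: g2f_def power2_eq_square)
    ultimately show ?thesis by (simp add: has_real_derivative_iff_has_vector_derivative)
  qed
  have hG2: "(g2f has_integral (G2 x - G2 (x/2))) {x/2..x}"
    using x0 dG2 by (intro fundamental_theorem_of_calculus) auto
  have le2: "M t \<le> g2f t" if "t \<in> {x/2..x}" for t
  proof -
    have e: "exp (-s*(x-t)) \<le> 1" using that s0 by auto
    have p1: "(t+1) powr (-\<gamma>) \<le> 2 * P"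
    proof -
      have "(t+1) powr (-\<gamma>) \<le> 2 powr \<gamma> * P"
        using powr_half_bound[of x t "-\<gamma>"] that x0 g1 by (simp add: P_def)
      also have "2 powr \<gamma> \<le> 2 powr 1" using g2 by (intro powr_mono) auto
      hence "2 powr \<gamma> * P \<le> 2 * P" by (simp add: P_def mult_right_mono)
      finally show ?thesis .
    qed
    have p2: "(t+1) powr (-\<gamma>-1) \<le> 4 * Q"
    proof -
      have "(t+1) powr (-\<gamma>-1) \<le> 2 powr (\<gamma>+1) * Q"
        using powr_half_bound[of x t "-\<gamma>-1"] that x0 g1 by (simp add: Q_def add.commute)
      also have "2 powr (\<gamma>+1) \<le> 2 powr 2" using g2 by (intro powr_mono) auto
      hence "2 powr (\<gamma>+1) * Q \<le> 4 * Q" by (simp add: Q_def mult_right_mono)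
      finally show ?thesis .
    qed
    have "s^2 * exp (-s*(x-t)) * (t+1) powr (-\<gamma>) \<le> s^2 * exp (-s*(x-t)) * (2 * P)"
      using p1 by (intro mult_left_mono) auto
    moreover have "s * exp (-s*(x-t)) * (t+1) powr (-\<gamma>-1) \<le> s * 1 * (4 * Q)"
      using e p2 s0 by (intro mult_mono) (auto simp: Q_def)
    moreover have "s^2 * exp (-s*(x-t)) * (2 * P) = 2 * s^2 * P * exp (-s*(x-t))" by (simp add: algebra_simps)
    ultimately show ?thesis
      unfolding M_def g2f_def by linarith
  qed
  have I2: "integral {x/2..x} M \<le> G2 x - G2 (x/2)"
    using has_integral_le[OF integrable_integral[OF int2] hG2] le2 by auto
  have "G2 x - G2 (x/2) = 2 * P * (s - s * exp (-s*x/2)) + 2 * s * x * Q"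
    by (simp add: G2_def algebra_simps)
  also have "\<dots> \<le> 2 * P + 2 * P"
  proof -
    have P0: "0 \<le> P" by (simp add: P_def)
    have Q0: "0 \<le> Q" by (simp add: Q_def)
    have PQ: "(x+1) * Q = P"
    proof -
      have "(x+1) powr (-\<gamma>) = (x+1) powr (1 + (-\<gamma>-1))" by simp
      also have "\<dots> = (x+1) powr 1 * (x+1) powr (-\<gamma>-1)" by (rule powr_add)
      finally show ?thesis using x0 by (simp add: P_def Q_def)
    qed
    have "0 \<le> s * exp (-s*x/2)" using s0 by simp
    hence a: "s - s * exp (-s*x/2) \<le> 1" using s1 by linarith
    have "s * x \<le> 1 * x" using s1 x0 by (intro mult_right_mono)
    hence "s * x \<le> x + 1" by simp
    hence "s * x * Q \<le> (x+1) * Q" using Q0 by (intro mult_right_mono)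
    hence b: "2 * s * x * Q \<le> 2 * P" using PQ by simp
    have "2 * P * (s - s * exp (-s*x/2)) \<le> 2 * P * 1" using a P0 by (intro mult_left_mono) auto
    with b show ?thesis by simp
  qed
  finally have I2': "integral {x/2..x} M \<le> 4 * (x+1) powr (-\<gamma>)" using I2 by (simp add: P_def)
  have "integral {0..x} M \<le> 17 * (x+1) powr (-\<gamma>)" using comb I1' I2' by linarith
  also have "\<dots> \<le> 20 * (x+1) powr (-\<gamma>)" by simp
  finally show ?thesis by (simp add: M_def)
qed

lemma main_bound:
  fixes \<gamma> \<epsilon> \<beta> :: real and a :: complex and b x :: real
  assumes g1: "1/2 < \<gamma>" and g2: "\<gamma> \<le> 1" and ep: "\<epsilon> > 0" and bp: "\<beta> > 0"
    and i0: "0 \<le> Im a" and i1: "Im a \<le> 1" and be: "\<bar>b\<bar> \<ge> \<epsilon>" and rb: "\<bar>Re a - b\<bar> \<le> \<beta> * Im a"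
    and x0: "x \<ge> 0"
  shows "cmod (exp (\<i> * a * of_real x) *
                 integral {0..x} (\<lambda>t. (exp (- \<i> * a * of_real t) - exp (- \<i> * of_real b * of_real t))
                                       / of_real ((t + 1) powr \<gamma>)))
         \<le> (2/\<epsilon> + (\<beta>+3)/\<epsilon>^2 + 2*(\<beta>+1)/\<epsilon>^2 + 20*(\<beta>+1)*(\<beta>+6)/\<epsilon>^2) * (x+1) powr (-\<gamma>)"
proof -
  define s where "s = Im a"
  define d where "d = a - of_real b"
  define c where "c = - \<i> * d"
  define e where "e = - \<gamma>"
  define C where "C = exp (\<i> * d * of_real x)"
  define P where "P = (x+1) powr (-\<gamma>)"
  define E where "E = (\<lambda>t::real. exp (\<i> * of_real b * of_real x) * exp ((- \<i> * of_real b) * of_real t))"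
  define \<psi> where "\<psi> = (\<lambda>t::real. C * ((exp (c * of_real t) - 1) * of_real ((t+1) powr e)))"
  define \<psi>1 where "\<psi>1 = (\<lambda>t::real. C * (c * exp (c * of_real t) * of_real ((t+1) powr e) + (exp (c * of_real t) - 1) * of_real (e * (t+1) powr (e-1))))"
  define \<psi>2 where "\<psi>2 = (\<lambda>t::real. C * (c^2 * exp (c * of_real t) * of_real ((t+1) powr e) + 2 * c * exp (c * of_real t) * of_real (e * (t+1) powr (e-1))
          + (exp (c * of_real t) - 1) * of_real (e * (e - 1) * (t+1) powr (e-2))))"
  define \<Psi> where "\<Psi> = (\<lambda>t. E t * (\<i> / of_real b * \<psi> t + 1 / (of_real b)^2 * \<psi>1 t))"
  define f where "f = (\<lambda>t::real. (exp (- \<i> * a * of_real t) - exp (- \<i> * of_real b * of_real t)) / of_real ((t + 1) powr \<gamma>))"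
  have s0: "0 \<le> s" and s1: "s \<le> 1" using i0 i1 by (auto simp: s_def)
  have b0: "b \<noteq> 0" using be ep by auto
  have Imd: "Im d = s" by (simp add: d_def s_def)
  have Red: "\<bar>Re d\<bar> \<le> \<beta> * s" using rb by (simp add: d_def s_def)
  have Dle: "cmod d \<le> (\<beta>+1) * s"
    using cmod_le[of d] Red Imd s0 by (simp add: algebra_simps)
  have Dle1: "cmod d \<le> \<beta>+1"
    using Dle s1 bp by (smt (verit) mult_left_le)
  have cmodc: "cmod c = cmod d" by (simp add: c_def norm_mult)
  have ident: "exp (\<i> * a * of_real x) * f t = E t * \<psi> t" if "t \<in> {0..x}" for t
  proof -
    have 1: "E t * C * exp (c * of_real t) = exp (\<i> * a * of_real x) * exp (- \<i> * a * of_real t)"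
      unfolding E_def C_def c_def d_def by (simp add: exp_add[symmetric] algebra_simps)
    have 2: "E t * C = exp (\<i> * a * of_real x) * exp (- \<i> * of_real b * of_real t)"
      unfolding E_def C_def d_def by (simp add: exp_add[symmetric] algebra_simps)
    have 3: "complex_of_real ((t+1) powr e) = 1 / of_real ((t + 1) powr \<gamma>)"
      by (simp add: e_def powr_minus divide_inverse)
    show ?thesis
      unfolding f_def \<psi>_def 3
      using 1 2 by (simp add: algebra_simps diff_divide_distrib)
  qed
  have intf: "exp (\<i> * a * of_real x) * integral {0..x} f = integral {0..x} (\<lambda>t. E t * \<psi> t)"
  proof -
    have "exp (\<i> * a * of_real x) * integral {0..x} f = integral {0..x} (\<lambda>t. exp (\<i> * a * of_real x) * f t)"
      by simp
    also have "\<dots> = integral {0..x} (\<lambda>t. E t * \<psi> t)"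
      using ident by (intro integral_cong) auto
    finally show ?thesis .
  qed
  have dE: "(E has_vector_derivative (-\<i> * of_real b * E t)) (at t within {0..x})" for t
  proof -
    have "(E has_vector_derivative (exp (\<i> * of_real b * of_real x) * ((- \<i> * of_real b) * exp ((- \<i> * of_real b) * of_real t)))) (at t within {0..x})"
      unfolding E_def by (intro has_vector_derivative_mult_right vd_exp)
    thus ?thesis by (simp add: E_def algebra_simps)
  qed
  have dpsi: "(\<psi> has_vector_derivative \<psi>1 t) (at t within {0..x})" if "t \<in> {0..x}" for t
    unfolding \<psi>_def \<psi>1_def using that by (intro vd_psi) auto
  have dpsi1: "(\<psi>1 has_vector_derivative \<psi>2 t) (at t within {0..x})" if "t \<in> {0..x}" for t
    unfolding \<psi>1_def \<psi>2_def using that by (intro vd_psi1) auto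
  have dPsi: "(\<Psi> has_vector_derivative (E t * \<psi> t + E t * \<psi>2 t / (of_real b)^2)) (at t within {0..x})"
    if "t \<in> {0..x}" for t
    unfolding \<Psi>_def using b0 dE dpsi[OF that] dpsi1[OF that] by (rule vd_Psi)
  have FTC: "((\<lambda>t. E t * \<psi> t + E t * \<psi>2 t / (of_real b)^2) has_integral (\<Psi> x - \<Psi> 0)) {0..x}"
    using x0 dPsi by (intro fundamental_theorem_of_calculus) auto
  have contE: "continuous_on {0..x} E"
    using dE by (intro continuous_on_vector_derivative) auto
  have contpsi: "continuous_on {0..x} \<psi>"
    using dpsi by (intro continuous_on_vector_derivative) auto
  have intEpsi: "(\<lambda>t. E t * \<psi> t) integrable_on {0..x}"
    using contE contpsi by (intro integrable_continuous_interval continuous_on_mult)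
  define I where "I = integral {0..x} (\<lambda>t. E t * \<psi> t)"
  define J where "J = \<Psi> x - \<Psi> 0 - I"
  have hJ: "((\<lambda>t. E t * \<psi>2 t / (of_real b)^2) has_integral J) {0..x}"
    using has_integral_diff[OF FTC integrable_integral[OF intEpsi]] by (simp add: J_def I_def)
  have IJ: "I = \<Psi> x - \<Psi> 0 - J" by (simp add: J_def)
  have nCq: "cmod (C * exp (c * of_real t)) = exp (-s*(x-t))" for t
  proof -
    have "cmod (C * exp (c * of_real t)) = exp (- s * x) * exp (s * t)"
      by (simp add: C_def c_def norm_mult Imd)
    also have "\<dots> = exp (-s*(x-t))" by (simp add: exp_add[symmetric] algebra_simps)
    finally show ?thesis .
  qed
  have nC: "cmod C = exp (-s*x)" by (simp add: C_def Imd)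
  have nCq1: "cmod (C * (exp (c * of_real t) - 1)) \<le> 2 * (\<beta>+1) * s * t * exp (-s*(x-t))" if t0: "0 \<le> t" for t
  proof -
    have "exp (c * of_real t) * exp (\<i> * d * of_real t) = 1"
      by (simp add: c_def exp_add[symmetric])
    hence eq: "C * (exp (c * of_real t) - 1) = - (C * exp (c * of_real t)) * (exp (\<i> * d * of_real t) - 1)"
      by (simp add: algebra_simps)
    have "cmod (exp (\<i> * d * of_real t) - 1) \<le> 2 * cmod (\<i> * d * of_real t)"
      using t0 s0 by (intro exp_minus_1_le) (simp add: Imd)
    also have "\<dots> = 2 * cmod d * t" using t0 by (simp add: norm_mult)
    also have "\<dots> \<le> 2 * ((\<beta>+1) * s) * t" using Dle t0 by (intro mult_right_mono) auto
    finally have h: "cmod (exp (\<i> * d * of_real t) - 1) \<le> 2 * ((\<beta>+1) * s) * t" .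
    have "cmod (C * (exp (c * of_real t) - 1)) = exp (-s*(x-t)) * cmod (exp (\<i> * d * of_real t) - 1)"
      unfolding eq by (subst norm_mult) (simp only: norm_minus_cancel nCq)
    also have "\<dots> \<le> exp (-s*(x-t)) * (2 * ((\<beta>+1) * s) * t)"
      using h by (intro mult_left_mono) auto
    finally show ?thesis by (simp add: algebra_simps)
  qed
  define M where "M = (\<lambda>t. s^2 * exp (-s*(x-t)) * (t+1) powr (-\<gamma>) + s * exp (-s*(x-t)) * (t+1) powr (-\<gamma>-1))"
  define K where "K = (\<beta>+1)*(\<beta>+6)"
  have pw2: "cmod (\<psi>2 t) \<le> K * M t" if t0: "0 \<le> t" for t
  proof -
    define W where "W = exp (-s*(x-t))"
    define p where "p = (t+1) powr (-\<gamma>)"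
    define r1 where "r1 = (t+1) powr (-\<gamma>-1)"
    define r2 where "r2 = (t+1) powr (-\<gamma>-2)"
    have W0: "0 \<le> W" and p0: "0 \<le> p" and r10: "0 \<le> r1" and r20: "0 \<le> r2"
      by (auto simp: W_def p_def r1_def r2_def)
    have tr: "t * r2 \<le> r1"
    proof -
      have "(t+1) powr (-\<gamma>-1) = (t+1) powr (1 + (-\<gamma>-2))"
        by (rule arg_cong[of _ _ "\<lambda>u. (t+1) powr u"]) simp
      also have "\<dots> = (t+1) powr 1 * (t+1) powr (-\<gamma>-2)" by (rule powr_add)
      finally have "r1 = (t+1) * r2" using t0 by (simp add: r1_def r2_def)
      thus ?thesis using r20 by (simp add: algebra_simps)
    qed
    have eq: "\<psi>2 t = (C * exp (c * of_real t)) * (c^2 * of_real p - 2 * c * of_real (\<gamma> * r1))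
               + (C * (exp (c * of_real t) - 1)) * of_real (\<gamma> * (\<gamma>+1) * r2)"
      by (simp add: \<psi>2_def e_def p_def r1_def r2_def algebra_simps diff_divide_distrib)
    have "cmod (\<psi>2 t) \<le> W * (cmod d ^ 2 * p + 2 * cmod d * (\<gamma> * r1))
               + (2 * (\<beta>+1) * s * t * W) * (\<gamma> * (\<gamma>+1) * r2)"
    proof -
      have a: "cmod ((C * exp (c * of_real t)) * (c^2 * of_real p - 2 * c * of_real (\<gamma> * r1)))
            \<le> W * (cmod d ^ 2 * p + 2 * cmod d * (\<gamma> * r1))"
      proof -
        have "cmod (c^2 * of_real p - 2 * c * of_real (\<gamma> * r1)) \<le> cmod (c^2 * of_real p) + cmod (2 * c * of_real (\<gamma> * r1))"
          by (rule norm_triangle_ineq4)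
        also have "\<dots> = cmod d ^ 2 * p + 2 * cmod d * (\<gamma> * r1)"
          using p0 r10 g1 by (simp add: norm_mult norm_power cmodc)
        finally have "W * cmod (c^2 * of_real p - 2 * c * of_real (\<gamma> * r1)) \<le> W * (cmod d ^ 2 * p + 2 * cmod d * (\<gamma> * r1))"
          using W0 by (rule mult_left_mono)
        moreover have "cmod ((C * exp (c * of_real t)) * (c^2 * of_real p - 2 * c * of_real (\<gamma> * r1)))
           = W * cmod (c^2 * of_real p - 2 * c * of_real (\<gamma> * r1))"
          by (subst norm_mult) (simp only: nCq W_def)
        ultimately show ?thesis by simp
      qed
      have b: "cmod ((C * (exp (c * of_real t) - 1)) * of_real (\<gamma> * (\<gamma>+1) * r2))
             \<le> (2 * (\<beta>+1) * s * t * W) * (\<gamma> * (\<gamma>+1) * r2)"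
      proof -
        have "0 \<le> \<gamma> * (\<gamma>+1) * r2" using g1 r20 by simp
        hence "cmod (C * (exp (c * of_real t) - 1)) * (\<gamma> * (\<gamma>+1) * r2) \<le> (2 * (\<beta>+1) * s * t * W) * (\<gamma> * (\<gamma>+1) * r2)"
          using nCq1[OF t0] by (intro mult_right_mono) (auto simp: W_def)
        moreover have "cmod ((C * (exp (c * of_real t) - 1)) * of_real (\<gamma> * (\<gamma>+1) * r2)) = cmod (C * (exp (c * of_real t) - 1)) * (\<gamma> * (\<gamma>+1) * r2)"
          by (simp only: norm_mult norm_of_real abs_of_nonneg[OF \<open>0 \<le> \<gamma> * (\<gamma>+1) * r2\<close>])
        ultimately show ?thesis by simp
      qed
      show ?thesis unfolding eq using a b norm_triangle_ineq[of "(C * exp (c * of_real t)) * (c^2 * of_real p - 2 * c * of_real (\<gamma> * r1))"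
          "(C * (exp (c * of_real t) - 1)) * of_real (\<gamma> * (\<gamma>+1) * r2)"] by linarith
    qed
    also have "\<dots> \<le> (\<beta>+1)^2 * (s^2*W*p) + 2*(\<beta>+1)*(s*W*r1) + 4*(\<beta>+1)*(s*W*r1)"
    proof -
      have i1: "W * ((cmod d)^2 * p) \<le> (\<beta>+1)^2 * (s^2*W*p)"
      proof -
        have "(cmod d)^2 \<le> ((\<beta>+1) * s)^2" using Dle by (intro power_mono) auto
        hence "(cmod d)^2 * (W*p) \<le> ((\<beta>+1) * s)^2 * (W*p)" using W0 p0 by (intro mult_right_mono) auto
        thus ?thesis by (simp add: algebra_simps power2_eq_square)
      qed
      have i2: "W*(2*cmod d*(\<gamma>*r1)) \<le> 2*(\<beta>+1)*(s*W*r1)"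
      proof -
        have "cmod d * \<gamma> \<le> ((\<beta>+1) * s) * 1" using Dle g1 g2 bp s0 by (intro mult_mono) auto
        hence "(cmod d * \<gamma>) * (2*W*r1) \<le> ((\<beta>+1) * s) * 1 * (2*W*r1)" using W0 r10 by (intro mult_right_mono) auto
        thus ?thesis by (simp add: algebra_simps)
      qed
      have i3: "(2*(\<beta>+1) * s*t*W)*(\<gamma>*(\<gamma>+1)*r2) \<le> 4*(\<beta>+1)*(s*W*r1)"
      proof -
        have hg: "\<gamma>*(\<gamma>+1) \<le> 1 * 2" using g1 g2 by (intro mult_mono) auto
        have "0 \<le> t*r2" using t0 r20 by simp
        hence "(\<gamma>*(\<gamma>+1)) * (t*r2) \<le> (1*2) * r1"
          by (intro mult_mono[OF hg tr]) auto
        hence "(\<gamma>*(\<gamma>+1)) * (t*r2) \<le> 2 * r1" by simp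
        moreover have "0 \<le> 2*(\<beta>+1) * s*W" using bp s0 W0 by simp
        ultimately have "(2*(\<beta>+1) * s*W) * ((\<gamma>*(\<gamma>+1)) * (t*r2)) \<le> (2*(\<beta>+1) * s*W) * (2 * r1)"
          by (intro mult_left_mono)
        thus ?thesis by (simp add: algebra_simps)
      qed
      have "W*((cmod d)^2*p + 2*cmod d*(\<gamma>*r1)) = W*((cmod d)^2*p) + W*(2*cmod d*(\<gamma>*r1))"
        by (rule distrib_left)
      thus ?thesis using i1 i2 i3 by linarith
    qed
    also have "\<dots> \<le> K * M t"
    proof -
      define A where "A = s^2*W*p"
      define B where "B = s*W*r1"
      have A0: "0 \<le> A" using W0 p0 by (simp add: A_def)
      have B0: "0 \<le> B" using W0 r10 s0 by (simp add: B_def)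
      have MAB: "M t = A + B" by (simp add: M_def A_def B_def W_def p_def r1_def)
      have "K * (A + B) = (\<beta>+1)^2*A + 5*(\<beta>+1)*A + 6*(\<beta>+1)*B + (\<beta>+1)*\<beta>*B"
        by (simp add: K_def algebra_simps power2_eq_square)
      moreover have "0 \<le> 5*(\<beta>+1)*A" "0 \<le> (\<beta>+1)*\<beta>*B" using A0 B0 bp by auto
      ultimately show ?thesis unfolding MAB A_def[symmetric] B_def[symmetric] by linarith
    qed
    finally show ?thesis .
  qed
  have M0: "0 \<le> M t" if "0 \<le> t" for t using s0 by (simp add: M_def)
  have K0: "0 \<le> K" using bp by (simp add: K_def)
  have nE: "cmod (E t) = 1" for t by (simp add: E_def norm_mult)
  have eb: "\<epsilon>^2 \<le> b^2" using be ep by (metis abs_le_square_iff abs_of_pos less_imp_le)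
  have ep2: "0 < \<epsilon>^2" using ep by simp
  have pwJ: "cmod (E t * \<psi>2 t / (of_real b)^2) \<le> K / \<epsilon>^2 * M t" if t: "t \<in> {0..x}" for t
  proof -
    have "cmod (E t * \<psi>2 t / (of_real b)^2) = cmod (\<psi>2 t) / b^2"
      by (simp add: norm_mult norm_divide norm_power nE)
    also have "\<dots> \<le> K * M t / b^2"
      using pw2[of t] t by (intro divide_right_mono) auto
    also have "\<dots> \<le> K * M t / \<epsilon>^2"
      using K0 M0[of t] t eb ep2 b0 by (intro divide_left_mono) auto
    finally show ?thesis by simp
  qed
  have intM: "(\<lambda>t. K / \<epsilon>^2 * M t) integrable_on {0..x}"
    unfolding M_def by (intro integrable_continuous_interval continuous_intros) auto
  have Jle: "cmod J \<le> K / \<epsilon>^2 * (20 * P)"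
  proof -
    have "cmod J = cmod (integral {0..x} (\<lambda>t. E t * \<psi>2 t / (of_real b)^2))"
      by (simp only: integral_unique[OF hJ])
    also have "\<dots> \<le> integral {0..x} (\<lambda>t. K / \<epsilon>^2 * M t)"
      using hJ intM pwJ by (intro integral_norm_bound_integral) (auto simp: has_integral_integrable)
    also have "\<dots> = K / \<epsilon>^2 * integral {0..x} M" by simp
    also have "\<dots> \<le> K / \<epsilon>^2 * (20 * P)"
      using M0_int[OF s0 s1 x0 g1 g2] K0 ep2 unfolding M_def P_def
      by (intro mult_left_mono) auto
    finally show ?thesis .
  qed
  have P0: "0 < P" using x0 by (simp add: P_def)
  have Pm: "(x+1) powr (-\<gamma>-1) \<le> P" using x0 unfolding P_def by (intro powr_mono) auto
  have nCqx: "cmod (C * exp (c * of_real x)) = 1" using nCq[of x] by simp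
  have nC1: "cmod C \<le> 1" using nC s0 x0 by simp
  have nCqx1: "cmod (C * (exp (c * of_real x) - 1)) \<le> 2"
  proof -
    have "cmod (C * (exp (c * of_real x) - 1)) = cmod (C * exp (c * of_real x) - C)" by (simp add: algebra_simps)
    also have "\<dots> \<le> cmod (C * exp (c * of_real x)) + cmod C" by (rule norm_triangle_ineq4)
    finally show ?thesis using nCqx nC1 by simp
  qed
  have psix: "cmod (\<psi> x) \<le> 2 * P"
  proof -
    have "cmod (\<psi> x) = cmod (C * (exp (c * of_real x) - 1)) * P"
      using P0 by (simp add: \<psi>_def norm_mult e_def P_def mult.assoc[symmetric])
    thus ?thesis using nCqx1 P0 by (simp add: mult_right_mono)
  qed
  have psi1x: "cmod (\<psi>1 x) \<le> (\<beta>+3) * P"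
  proof -
    have eq: "\<psi>1 x = (C * exp (c * of_real x)) * c * of_real P + (C * (exp (c * of_real x) - 1)) * of_real (- \<gamma> * (x+1) powr (-\<gamma>-1))"
      by (simp add: \<psi>1_def e_def P_def algebra_simps)
    have "cmod (\<psi>1 x) \<le> cmod ((C * exp (c * of_real x)) * c * of_real P) + cmod ((C * (exp (c * of_real x) - 1)) * of_real (- \<gamma> * (x+1) powr (-\<gamma>-1)))"
      unfolding eq by (rule norm_triangle_ineq)
    also have "cmod ((C * exp (c * of_real x)) * c * of_real P) = cmod d * P"
    proof -
      have "cmod ((C * exp (c * of_real x)) * c * of_real P) = cmod (C * exp (c * of_real x)) * cmod c * cmod (complex_of_real P)"
        by (simp only: norm_mult[of "C * exp (c * of_real x) * c"] norm_mult[of "C * exp (c * of_real x)" c])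
      thus ?thesis using P0 nCqx cmodc by simp
    qed
    also have "cmod ((C * (exp (c * of_real x) - 1)) * of_real (- \<gamma> * (x+1) powr (-\<gamma>-1)))
        = cmod (C * (exp (c * of_real x) - 1)) * (\<gamma> * (x+1) powr (-\<gamma>-1))"
      using g1 by (simp only: norm_mult norm_of_real) simp
    also have "cmod d * P + cmod (C * (exp (c * of_real x) - 1)) * (\<gamma> * (x+1) powr (-\<gamma>-1))
        \<le> (\<beta>+1) * P + 2 * (1 * P)"
      using Dle1 P0 nCqx1 g1 g2 Pm bp by (intro add_mono mult_mono) auto
    finally show ?thesis by (simp add: algebra_simps)
  qed
  have nb: "cmod (complex_of_real b) = \<bar>b\<bar>" by simp
  have Psix: "cmod (\<Psi> x) \<le> 2 / \<epsilon> * P + (\<beta>+3) / \<epsilon>^2 * P"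
  proof -
    have "cmod (\<Psi> x) \<le> cmod (\<i> / of_real b * \<psi> x) + cmod (1 / (of_real b)^2 * \<psi>1 x)"
    proof -
      have "cmod (\<Psi> x) = cmod (\<i> / of_real b * \<psi> x + 1 / (of_real b)^2 * \<psi>1 x)"
        unfolding \<Psi>_def by (simp only: norm_mult[of "E x"] nE mult_1)
      thus ?thesis using norm_triangle_ineq by simp
    qed
    also have "cmod (\<i> / of_real b * \<psi> x) = cmod (\<psi> x) / \<bar>b\<bar>"
      by (simp add: norm_mult norm_divide)
    also have "cmod (1 / (of_real b)^2 * \<psi>1 x) = cmod (\<psi>1 x) / b^2"
      by (simp add: norm_mult norm_divide norm_power)
    also have "cmod (\<psi> x) / \<bar>b\<bar> \<le> (2 * P) / \<epsilon>"
      using psix be ep P0 by (intro frac_le) auto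
    also have "cmod (\<psi>1 x) / b^2 \<le> ((\<beta>+3) * P) / \<epsilon>^2"
      using psi1x eb ep2 P0 bp by (intro frac_le) auto
    finally show ?thesis by (simp add: algebra_simps)
  qed
  have Psi0: "cmod (\<Psi> 0) \<le> 2 * (\<beta>+1) / \<epsilon>^2 * P"
  proof -
    have "\<psi> 0 = 0" by (simp add: \<psi>_def)
    moreover have "\<psi>1 0 = C * c" by (simp add: \<psi>1_def)
    ultimately have "\<Psi> 0 = E 0 * (1 / (of_real b)^2 * (C * c))" by (simp add: \<Psi>_def)
    hence "cmod (\<Psi> 0) = exp (-s*x) * cmod d / b^2"
      by (simp add: norm_mult norm_divide norm_power nE nC cmodc)
    also have "\<dots> \<le> exp (-s*x) * ((\<beta>+1) * s) / \<epsilon>^2"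
      using Dle eb ep2 b0 bp s0 by (intro frac_le mult_left_mono) auto
    also have "exp (-s*x) * ((\<beta>+1) * s) \<le> (\<beta>+1) * (2 * P)"
    proof -
      have "exp (-s*x) \<le> exp (-s*x/2)" using s0 x0 by (simp add: mult_nonneg_nonneg)
      hence "s * exp (-s*x) \<le> s * exp (-s*x/2)" using s0 by (rule mult_left_mono)
      also have "\<dots> \<le> 2 / (x+1)" using E2[OF s0 s1 x0] by simp
      also have "\<dots> = 2 * (x+1) powr (-1)" using x0 by (simp add: powr_minus_divide)
      also have "\<dots> \<le> 2 * P" unfolding P_def using x0 g2 by (intro mult_left_mono powr_mono) auto
      finally have "s * exp (-s*x) \<le> 2 * P" .
      hence "(\<beta>+1) * (s * exp (-s*x)) \<le> (\<beta>+1) * (2 * P)" using bp by (intro mult_left_mono) auto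
      thus ?thesis by (simp add: algebra_simps)
    qed
    hence "exp (-s*x) * ((\<beta>+1) * s) / \<epsilon>^2 \<le> (\<beta>+1) * (2 * P) / \<epsilon>^2"
      using ep2 by (intro divide_right_mono) auto
    finally show ?thesis by (simp add: algebra_simps)
  qed
  have "cmod (exp (\<i> * a * of_real x) * integral {0..x} f) = cmod I"
    using intf by (simp add: I_def)
  also have "\<dots> \<le> cmod (\<Psi> x) + cmod (\<Psi> 0) + cmod J"
    unfolding IJ by (metis norm_triangle_ineq4 norm_triangle_ineq order_trans add_right_mono)
  also have "\<dots> \<le> (2 / \<epsilon> * P + (\<beta>+3) / \<epsilon>^2 * P) + 2 * (\<beta>+1) / \<epsilon>^2 * P + K / \<epsilon>^2 * (20 * P)"
    using Psix Psi0 Jle by linarith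
  also have "\<dots> = (2/\<epsilon> + (\<beta>+3)/\<epsilon>^2 + 2*(\<beta>+1)/\<epsilon>^2 + 20*(\<beta>+1)*(\<beta>+6)/\<epsilon>^2) * (x+1) powr (-\<gamma>)"
    by (simp add: K_def P_def algebra_simps add_divide_distrib)
  finally show ?thesis by (simp add: f_def)
qed


theorem lemma3p3:
  fixes \<gamma> \<epsilon> \<beta> :: real
  assumes "1/2 < \<gamma>" and "\<gamma> \<le> 1" and "\<epsilon> > 0" and "\<beta> > 0"
  shows "\<exists>c2::real. \<forall>(\<xi>1::complex) (\<xi>2::real) (x::real).
           0 \<le> Im \<xi>1 \<and> Im \<xi>1 \<le> 1 \<and> cmod \<xi>1 \<ge> \<epsilon> \<and> \<bar>\<xi>2\<bar> \<ge> \<epsilon> \<and>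
           \<bar>Re \<xi>1 - \<xi>2\<bar> \<le> \<beta> * Im \<xi>1 \<and> x \<ge> 0 \<longrightarrow>
           cmod (exp (\<i> * \<xi>1 * of_real x) *
                 integral {0..x} (\<lambda>t. (exp (- \<i> * \<xi>1 * of_real t) - exp (- \<i> * of_real \<xi>2 * of_real t))
                                       / of_real ((t + 1) powr \<gamma>)))
           < c2 / (x + 1) powr \<gamma>"
proof -
  define B where "B = 2/\<epsilon> + (\<beta>+3)/\<epsilon>^2 + 2*(\<beta>+1)/\<epsilon>^2 + 20*(\<beta>+1)*(\<beta>+6)/\<epsilon>^2"
  show ?thesis
  proof (rule exI[of _ "B + 1"], intro allI impI)
    fix \<xi>1 :: complex and \<xi>2 x :: real
    assume H: "0 \<le> Im \<xi>1 \<and> Im \<xi>1 \<le> 1 \<and> cmod \<xi>1 \<ge> \<epsilon> \<and> \<bar>\<xi>2\<bar> \<ge> \<epsilon> \<and>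
           \<bar>Re \<xi>1 - \<xi>2\<bar> \<le> \<beta> * Im \<xi>1 \<and> x \<ge> 0"
    have "cmod (exp (\<i> * \<xi>1 * of_real x) *
                 integral {0..x} (\<lambda>t. (exp (- \<i> * \<xi>1 * of_real t) - exp (- \<i> * of_real \<xi>2 * of_real t))
                                       / of_real ((t + 1) powr \<gamma>)))
          \<le> B * (x+1) powr (-\<gamma>)"
      unfolding B_def using assms H by (intro main_bound) auto
    also have "\<dots> < (B + 1) * (x+1) powr (-\<gamma>)"
      using H by simp
    also have "\<dots> = (B + 1) / (x + 1) powr \<gamma>"
      using H by (simp add: powr_minus divide_inverse)
    finally show "cmod (exp (\<i> * \<xi>1 * of_real x) *
                 integral {0..x} (\<lambda>t. (exp (- \<i> * \<xi>1 * of_real t) - exp (- \<i> * of_real \<xi>2 * of_real t))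
                                       / of_real ((t + 1) powr \<gamma>)))
           < (B + 1) / (x + 1) powr \<gamma>" .
  qed
qed

end
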